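(* Let $\Delta$ be a simplicial polytopal fan in $\mathbb{R}^d$ with ray generators $\mathbf{v}_1,\ldots,\mathbf{v}_n$, let $\{(\mathbf{u}^{(i)},y^{(i)})\}_{i=1}^m\subset\mathbb{R}^d\times\mathbb{R}$ be a data set, $U=(\mathbf{u}^{(1)},\ldots,\mathbf{u}^{(m)})^\mathsf{T}$ and $\mathbf{y}=(y^{(1)},\ldots,y^{(m)})^\mathsf{T}$. Then \[ \hat{P}^\Delta(U,\mathbf{y})=\operatorname{argmin}_{P(\mathbf{h})\in\mathcal{P}(\Delta)}\|A_U\mathbf{h}-\mathbf{y}\|. \] Equivalently, \[ \hat{P}^\Delta(U,\mathbf{y})=\mathcal{P}(\Delta)\cap\{\mathbf{h}\in\mathbb{R}^n\colon A_U\mathbf{h}=\hat{\mathbf{y}}\}, \] where $\hat{\mathbf{y}}\in A_U\mathcal{P}(\Delta)$ is the unique point of $A_U\mathcal{P}(\Delta)$ of minimal distance to $\mathbf{y}$. In particular, the solution set $\hat{P}^\Delta(U,\mathbf{y})$ is a non-empty polyhedron in $\mathbb{R}^n$.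
   Context: A fan is simplicial if every cone is generated by linearly independent vectors; it is polytopal if it is the normal fan of a polytope (so its support is $\mathbb{R}^d$). The support function of a convex body $P$ is $h_P(\mathbf{u})=\max_{\mathbf{x}\in P}\langle\mathbf{x},\mathbf{u}\rangle$. For $\mathbf{h}\in\mathbb{R}^n$ let $P(\mathbf{h})=\{\mathbf{x}\in\mathbb{R}^d\colon\langle\mathbf{x},\mathbf{v}_i\rangle\le h_i,\ i=1,\ldots,n\}$. The deformation cone $\mathcal{P}(\Delta)$ is the set of all polytopes whose normal fan is a coarsening of $\Delta$ (every cone of their normal fan is a union of cones of $\Delta$); such a polytope $P$ equals $P(\mathbf{h})$ for its support vector $\mathbf{h}=(h_P(\mathbf{v}_1),\ldots,h_P(\mathbf{v}_n))$, and via $P(\mathbf{h})\mapsto\mathbf{h}$ the set $\mathcal{P}(\Delta)$ is identified with a closed full-dimensional polyhedral cone in $\mathbb{R}^n$. For $\mathbf{u}\in\mathbb{R}^d$ let $\sigma$ be the unique cone of $\Delta$ with $\mathbf{u}$ in its relative interior, $I_\sigma$ the index set of its generators, and write $\mathbf{u}=\sum_{k\in I_\sigma}\lambda_k\mathbf{v}_k$; define $[\mathbf{u}]\in\mathbb{R}^n$ by $[\mathbf{u}]_i=\lambda_i$ for $i\in I_\sigma$ and $0$ otherwise. $A_U\in\mathbb{R}^{m\times n}$ is the matrix with rows $[\mathbf{u}^{(1)}]^\mathsf{T},\ldots,[\mathbf{u}^{(m)}]^\mathsf{T}$. The least-squares estimator is $\hat{P}^\Delta(U,\mathbf{y})=\operatorname{argmin}_{P\in\mathcal{P}(\Delta)}\frac1m\sum_{i=1}^m(h_P(\mathbf{u}^{(i)})-y^{(i)})^2$,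 regarded as a set of support vectors in $\mathbb{R}^n$. *)

theory Defs
  imports "HOL-Analysis.Analysis"
begin

text \<open>Ray generators are v :: 'n => real^'d (index type 'n, so n = CARD('n)).
  A simplicial fan is given by its set of cones, each cone described by the index set
  of its generators.\<close>

definition cone_of :: "('n \<Rightarrow> real^'d) \<Rightarrow> 'n set \<Rightarrow> (real^'d) set" where
  "cone_of v S = {x. \<exists>c. (\<forall>i\<in>S. 0 \<le> c i) \<and> x = (\<Sum>i\<in>S. c i *\<^sub>R v i)}"

definition simplicial_fan :: "'n set set \<Rightarrow> ('n::finite \<Rightarrow> real^'d) \<Rightarrow> bool" where
  "simplicial_fan \<Delta> v \<longleftrightarrow>
     (\<forall>S\<in>\<Delta>. inj_on v S \<and> independent (v ` S)) \<and>
     (\<forall>S\<in>\<Delta>. \<forall>T. T \<subseteq> S \<longrightarrow> T \<in> \<Delta>) \<and>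
     (\<forall>S\<in>\<Delta>. \<forall>T\<in>\<Delta>. cone_of v S \<inter> cone_of v T = cone_of v (S \<inter> T)) \<and>
     (\<forall>i. {i} \<in> \<Delta>)"

definition normal_cone :: "(real^'d) set \<Rightarrow> (real^'d) set \<Rightarrow> (real^'d) set" where
  "normal_cone P F = {u. \<forall>x\<in>F. \<forall>z\<in>P. z \<bullet> u \<le> x \<bullet> u}"

definition normal_fan :: "(real^'d) set \<Rightarrow> (real^'d) set set" where
  "normal_fan P = {normal_cone P F | F. F face_of P \<and> F \<noteq> {}}"

definition polytopal_fan :: "'n set set \<Rightarrow> ('n::finite \<Rightarrow> real^'d) \<Rightarrow> bool" where
  "polytopal_fan \<Delta> v \<longleftrightarrow>
     (\<exists>P. polytope P \<and> {cone_of v S | S. S \<in> \<Delta>} = normal_fan P)"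

definition support_fun :: "(real^'d) set \<Rightarrow> real^'d \<Rightarrow> real" where
  "support_fun P u = Sup ((\<lambda>x. x \<bullet> u) ` P)"

definition P_of :: "('n::finite \<Rightarrow> real^'d) \<Rightarrow> real^'n \<Rightarrow> (real^'d) set" where
  "P_of v h = {x. \<forall>i. x \<bullet> v i \<le> h $ i}"

definition coarsens :: "(real^'d) set \<Rightarrow> 'n set set \<Rightarrow> ('n \<Rightarrow> real^'d) \<Rightarrow> bool" where
  "coarsens Q \<Delta> v \<longleftrightarrow>
     (\<forall>C\<in>normal_fan Q. \<exists>T\<subseteq>\<Delta>. C = (\<Union>S\<in>T. cone_of v S))"

definition def_cone :: "'n set set \<Rightarrow> ('n::finite \<Rightarrow> real^'d) \<Rightarrow> (real^'n) set" where
  "def_cone \<Delta> v = {h. \<exists>Q. polytope Q \<and> Q \<noteq> {} \<and> coarsens Q \<Delta> v \<and>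
                          h = (\<chi> i. support_fun Q (v i))}"

definition coord_vec :: "'n set set \<Rightarrow> ('n::finite \<Rightarrow> real^'d) \<Rightarrow> real^'d \<Rightarrow> real^'n" where
  "coord_vec \<Delta> v u = (THE c. \<exists>S\<in>\<Delta>. u \<in> rel_interior (cone_of v S) \<and>
                          (\<forall>i. i \<notin> S \<longrightarrow> c $ i = 0) \<and> u = (\<Sum>i\<in>S. c $ i *\<^sub>R v i))"

definition A_mat :: "'n set set \<Rightarrow> ('n::finite \<Rightarrow> real^'d) \<Rightarrow> ('m::finite \<Rightarrow> real^'d) \<Rightarrow> real^'n^'m" where
  "A_mat \<Delta> v U = (\<chi> k. coord_vec \<Delta> v (U k))"

definition ls_objective :: "('n::finite \<Rightarrow> real^'d) \<Rightarrow> ('m::finite \<Rightarrow> real^'d) \<Rightarrow> real^'m \<Rightarrow> real^'n \<Rightarrow> real" where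
  "ls_objective v U y h =
     (1 / real CARD('m)) * (\<Sum>k\<in>UNIV. (support_fun (P_of v h) (U k) - y $ k)\<^sup>2)"

definition LSE :: "'n set set \<Rightarrow> ('n::finite \<Rightarrow> real^'d) \<Rightarrow> ('m::finite \<Rightarrow> real^'d) \<Rightarrow> real^'m \<Rightarrow> (real^'n) set" where
  "LSE \<Delta> v U y = {h \<in> def_cone \<Delta> v.
      \<forall>h' \<in> def_cone \<Delta> v. ls_objective v U y h \<le> ls_objective v U y h'}"

end

theory Submission
  imports Defs
begin

lemma linear_inner_rep:
  fixes l :: "'a::euclidean_space \<Rightarrow> real"
  assumes "linear l"
  shows "l x = (\<Sum>b\<in>Basis. l b *\<^sub>R b) \<bullet> x"
proof -
  have "l x = l (\<Sum>b\<in>Basis. (x \<bullet> b) *\<^sub>R b)" by (simp add: euclidean_representation)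
  also have "\<dots> = (\<Sum>b\<in>Basis. (x \<bullet> b) * l b)"
    using assms by (simp add: linear_sum linear_scale)
  also have "\<dots> = (\<Sum>b\<in>Basis. l b * (b \<bullet> x))"
    by (simp add: inner_commute mult.commute)
  also have "\<dots> = (\<Sum>b\<in>Basis. l b *\<^sub>R b) \<bullet> x"
    by (simp add: inner_sum_left)
  finally show ?thesis .
qed

lemma linear_inner_ex:
  fixes l :: "'a::euclidean_space \<Rightarrow> real"
  assumes "linear l"
  shows "\<exists>a. \<forall>x. l x = a \<bullet> x"
  using linear_inner_rep[OF assms] by blast

lemma polyhedron_linear_le:
  fixes l :: "'a::euclidean_space \<Rightarrow> real"
  assumes "linear l"
  shows "polyhedron {x. l x \<le> b}"
proof -
  obtain a where a: "\<forall>x. l x = a \<bullet> x" using linear_inner_ex[OF assms] by blast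
  have "{x. l x \<le> b} = {x. a \<bullet> x \<le> b}" using a by presburger
  then show ?thesis by (simp add: polyhedron_halfspace_le)
qed

lemma polyhedron_linear_eq:
  fixes l :: "'a::euclidean_space \<Rightarrow> real"
  assumes "linear l"
  shows "polyhedron {x. l x = b}"
proof -
  obtain a where a: "\<forall>x. l x = a \<bullet> x" using linear_inner_ex[OF assms] by blast
  have "{x. l x = b} = {x. a \<bullet> x = b}" using a by presburger
  then show ?thesis by (simp add: polyhedron_hyperplane)
qed

lemma indep_coeff:
  fixes v :: "'n \<Rightarrow> 'a::real_vector"
  assumes inj: "inj_on v S" and ind: "independent (v ` S)" and fin: "finite S"
    and eq: "(\<Sum>i\<in>S. a i *\<^sub>R v i) = (\<Sum>i\<in>S. b i *\<^sub>R v i)" and i: "i \<in> S"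
  shows "a i = b i"
proof -
  define u where "u w = a (the_inv_into S v w) - b (the_inv_into S v w)" for w
  have "(\<Sum>w\<in>v ` S. u w *\<^sub>R w) = (\<Sum>j\<in>S. u (v j) *\<^sub>R v j)"
    using inj by (simp add: sum.reindex)
  also have "\<dots> = (\<Sum>j\<in>S. (a j - b j) *\<^sub>R v j)"
    using inj by (intro sum.cong) (auto simp: u_def the_inv_into_f_f)
  also have "\<dots> = 0" using eq by (simp add: scaleR_diff_left sum_subtractf)
  finally have "u (v i) = 0"
    using independent_explicit_module[THEN iffD1, OF ind, rule_format, of "v ` S" u "v i"] fin i
    by auto
  then show ?thesis using inj i by (simp add: u_def the_inv_into_f_f)
qed

lemma cone_ofI: "(\<forall>i\<in>S. 0 \<le> c i) \<Longrightarrow> (\<Sum>i\<in>S. c i *\<^sub>R v i) \<in> cone_of v S"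
  unfolding cone_of_def by blast

lemma cone_ofE:
  assumes "x \<in> cone_of v S"
  obtains c where "\<forall>i\<in>S. 0 \<le> c i" "x = (\<Sum>i\<in>S. c i *\<^sub>R v i)"
  using assms unfolding cone_of_def by blast

lemma sf_inj: "simplicial_fan \<Delta> v \<Longrightarrow> S \<in> \<Delta> \<Longrightarrow> inj_on v S"
  and sf_ind: "simplicial_fan \<Delta> v \<Longrightarrow> S \<in> \<Delta> \<Longrightarrow> independent (v ` S)"
  and sf_sub: "simplicial_fan \<Delta> v \<Longrightarrow> S \<in> \<Delta> \<Longrightarrow> T \<subseteq> S \<Longrightarrow> T \<in> \<Delta>"
  and sf_int: "simplicial_fan \<Delta> v \<Longrightarrow> S \<in> \<Delta> \<Longrightarrow> T \<in> \<Delta> \<Longrightarrow>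
                 cone_of v S \<inter> cone_of v T = cone_of v (S \<inter> T)"
  and sf_single: "simplicial_fan \<Delta> v \<Longrightarrow> {i} \<in> \<Delta>"
  unfolding simplicial_fan_def by auto

lemma sf_empty: "simplicial_fan \<Delta> v \<Longrightarrow> {} \<in> \<Delta>"
  using sf_single[of \<Delta> v undefined] sf_sub[of \<Delta> v "{undefined}" "{}"] by simp

lemma argmax_face:
  fixes P :: "(real^'d) set"
  assumes P: "polytope P" "P \<noteq> {}"
  shows "\<exists>F. F face_of P \<and> F \<noteq> {} \<and> u \<in> normal_cone P F"
proof -
  have cpt: "compact P" using P(1) by (rule polytope_imp_compact)
  have "continuous_on P (\<lambda>z. z \<bullet> u)" by (intro continuous_intros)
  then obtain s where s: "s \<in> P" "\<forall>z\<in>P. z \<bullet> u \<le> s \<bullet> u"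
    using continuous_attains_sup[OF cpt P(2)] by blast
  define F where "F = P \<inter> {x. u \<bullet> x = u \<bullet> s}"
  have "F face_of P" unfolding F_def
    using face_of_Int_supporting_hyperplane_le[of P u "u \<bullet> s"] polytope_imp_convex[OF P(1)] s
    by (simp add: inner_commute)
  moreover have "F \<noteq> {}" using s unfolding F_def by blast
  moreover have "u \<in> normal_cone P F"
    unfolding normal_cone_def F_def using s by (auto simp: inner_commute)
  ultimately show ?thesis by blast
qed

lemma fan_complete:
  fixes v :: "'n::finite \<Rightarrow> real^'d"
  assumes sf: "simplicial_fan \<Delta> v" and pf: "polytopal_fan \<Delta> v"
  shows "\<exists>S\<in>\<Delta>. u \<in> cone_of v S"
proof -
  obtain P where P: "polytope P" "{cone_of v S |S. S \<in> \<Delta>} = normal_fan P"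
    using pf unfolding polytopal_fan_def by blast
  have "{undefined} \<in> \<Delta>" using sf by (rule sf_single)
  then have "cone_of v {undefined} \<in> normal_fan P" using P(2) by blast
  then obtain F0 where "F0 face_of P" "F0 \<noteq> {}" unfolding normal_fan_def by blast
  then have "P \<noteq> {}" using face_of_imp_subset by blast
  from argmax_face[OF P(1) this] obtain F where F: "F face_of P" "F \<noteq> {}" "u \<in> normal_cone P F"
    by blast
  then have "normal_cone P F \<in> normal_fan P" unfolding normal_fan_def by blast
  then have "normal_cone P F \<in> {cone_of v S |S. S \<in> \<Delta>}" using P(2) by simp
  then obtain S where "S \<in> \<Delta>" "normal_cone P F = cone_of v S" by blast
  then show ?thesis using F(3) by blast
qed

lemma pos_support:
  fixes v :: "'n::finite \<Rightarrow> real^'d"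
  assumes sf: "simplicial_fan \<Delta> v" and pf: "polytopal_fan \<Delta> v"
  shows "\<exists>S\<in>\<Delta>. \<exists>c. (\<forall>i\<in>S. 0 < c i) \<and> u = (\<Sum>i\<in>S. c i *\<^sub>R v i)"
proof -
  obtain S where S: "S \<in> \<Delta>" "u \<in> cone_of v S" using fan_complete[OF sf pf] by blast
  obtain c where c: "\<forall>i\<in>S. 0 \<le> c i" "u = (\<Sum>i\<in>S. c i *\<^sub>R v i)" using cone_ofE[OF S(2)] by blast
  define S' where "S' = {i\<in>S. 0 < c i}"
  have "S' \<subseteq> S" unfolding S'_def by blast
  then have S'D: "S' \<in> \<Delta>" using sf_sub[OF sf S(1)] by blast
  have "(\<Sum>i\<in>S'. c i *\<^sub>R v i) = (\<Sum>i\<in>S. c i *\<^sub>R v i)"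
  proof (rule sum.mono_neutral_left)
    show "finite S" by simp
    show "S' \<subseteq> S" by fact
    show "\<forall>i\<in>S - S'. c i *\<^sub>R v i = 0"
    proof
      fix i assume "i \<in> S - S'"
      then have "c i = 0" using c(1) unfolding S'_def by force
      then show "c i *\<^sub>R v i = 0" by simp
    qed
  qed
  moreover have "\<forall>i\<in>S'. 0 < c i" unfolding S'_def by blast
  ultimately show ?thesis using c(2) S'D by metis
qed

lemma relint_pos:
  fixes v :: "'n::finite \<Rightarrow> real^'d"
  assumes inj: "inj_on v S" and ind: "independent (v ` S)" and c: "\<forall>i\<in>S. 0 < c i"
  shows "(\<Sum>i\<in>S. c i *\<^sub>R v i) \<in> rel_interior (cone_of v S)"
proof -
  obtain g :: "real^'d \<Rightarrow> real^'n" where g: "linear g" "\<forall>x\<in>v ` S. g x = axis (the_inv_into S v x) 1"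
    using linear_independent_extend[OF ind, of "\<lambda>x. axis (the_inv_into S v x) 1"] by blast
  have gv: "g (v i) = axis i 1" if "i \<in> S" for i
    using g(2) that inj by (simp add: the_inv_into_f_f)
  have gsum: "g (\<Sum>i\<in>S. a i *\<^sub>R v i) $ j = a j" if "j \<in> S" for a j
  proof -
    have "g (\<Sum>i\<in>S. a i *\<^sub>R v i) = (\<Sum>i\<in>S. a i *\<^sub>R axis i 1)"
      using g(1) gv by (simp add: linear_sum linear_scale)
    also have "\<dots> $ j = (\<Sum>i\<in>S. a i * (if j = i then 1 else 0))"
      by (simp add: axis_def)
    also have "\<dots> = (\<Sum>i\<in>S. if j = i then a i else 0)"
      by (rule sum.cong) auto
    also have "\<dots> = a j" using that by simp
    finally show ?thesis .
  qed
  define T where "T = (\<Inter>j\<in>S. {w. 0 < g w $ j})"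
  have "open {w. 0 < g w $ j}" for j
  proof -
    have "bounded_linear (\<lambda>w. g w $ j)"
      using bounded_linear_compose[OF bounded_linear_vec_nth[of j] linear_conv_bounded_linear[THEN iffD1, OF g(1)]] .
    then have "continuous_on UNIV (\<lambda>w. g w $ j)" by (rule linear_continuous_on)
    then show "open {w. 0 < g w $ j}"
      using open_Collect_less[of "\<lambda>_. 0" "\<lambda>w. g w $ j"] by simp
  qed
  then have "open T" unfolding T_def by (simp add: open_INT)
  moreover have "(\<Sum>i\<in>S. c i *\<^sub>R v i) \<in> T" unfolding T_def using gsum c by simp
  moreover have "(\<Sum>i\<in>S. c i *\<^sub>R v i) \<in> cone_of v S"
    using c by (intro cone_ofI) (simp add: less_imp_le)
  moreover have "T \<inter> affine hull (cone_of v S) \<subseteq> cone_of v S"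
  proof
    fix w assume w: "w \<in> T \<inter> affine hull (cone_of v S)"
    have "cone_of v S \<subseteq> span (v ` S)"
    proof
      fix x assume "x \<in> cone_of v S"
      then obtain d where "x = (\<Sum>i\<in>S. d i *\<^sub>R v i)" by (rule cone_ofE)
      then show "x \<in> span (v ` S)"
        by (simp add: span_sum span_scale span_base)
    qed
    then have "span (cone_of v S) \<subseteq> span (v ` S)"
      by (simp add: span_minimal)
    then have "w \<in> span (v ` S)" using w affine_hull_subset_span by blast
    then obtain a where a: "w = (\<Sum>x\<in>v ` S. a x *\<^sub>R x)"
      using span_finite[of "v ` S"] by auto
    also have "\<dots> = (\<Sum>i\<in>S. a (v i) *\<^sub>R v i)"
      using inj by (simp add: sum.reindex)
    finally have wa: "w = (\<Sum>i\<in>S. a (v i) *\<^sub>R v i)" .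
    have "\<forall>i\<in>S. 0 \<le> a (v i)"
    proof
      fix i assume i: "i \<in> S"
      have "0 < g w $ i" using w i unfolding T_def by blast
      then show "0 \<le> a (v i)" using gsum[OF i, of "\<lambda>i. a (v i)"] wa by simp
    qed
    then show "w \<in> cone_of v S" using wa cone_ofI by metis
  qed
  ultimately show ?thesis unfolding mem_rel_interior by (intro exI[of _ T]) blast
qed

lemma cone_of_zero: "0 \<in> cone_of v S"
  using cone_ofI[of S "\<lambda>_. 0" v] by simp

lemma cone_of_gen:
  assumes "j \<in> S" "finite S"
  shows "v j \<in> cone_of v S"
proof -
  have "(\<Sum>i\<in>S. (if i = j then 1 else 0) *\<^sub>R v i) = (\<Sum>i\<in>S. if i = j then v i else 0)"
    by (rule sum.cong) auto
  also have "\<dots> = v j" using assms by simp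
  finally show ?thesis using cone_ofI[of S "\<lambda>i. if i = j then 1 else 0" v] by simp
qed

lemma sum_restrict_scaleR:
  fixes v :: "'n \<Rightarrow> 'a::real_vector"
  assumes "finite S"
  shows "(\<Sum>i\<in>S \<inter> T. e i *\<^sub>R v i) = (\<Sum>i\<in>S. (if i \<in> T then e i else 0) *\<^sub>R v i)"
proof -
  have "(\<Sum>i\<in>S \<inter> T. e i *\<^sub>R v i) = (\<Sum>i\<in>S. if i \<in> T then e i *\<^sub>R v i else 0)"
    using assms by (rule sum.inter_restrict)
  also have "\<dots> = (\<Sum>i\<in>S. (if i \<in> T then e i else 0) *\<^sub>R v i)"
    by (rule sum.cong) auto
  finally show ?thesis .
qed

lemma relint_unique:
  fixes v :: "'n::finite \<Rightarrow> real^'d"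
  assumes sf: "simplicial_fan \<Delta> v" and S0: "S0 \<in> \<Delta>" and c0: "\<forall>i\<in>S0. 0 < c0 i"
    and u: "u = (\<Sum>i\<in>S0. c0 i *\<^sub>R v i)"
    and S: "S \<in> \<Delta>" and ri: "u \<in> rel_interior (cone_of v S)"
  shows "S = S0"
proof -
  have uS: "u \<in> cone_of v S" using ri rel_interior_subset by blast
  have uS0: "u \<in> cone_of v S0" using u c0 by (simp add: cone_ofI less_imp_le)
  have "u \<in> cone_of v (S0 \<inter> S)" using sf_int[OF sf S0 S] uS uS0 by blast
  then obtain e where e: "u = (\<Sum>i\<in>S0 \<inter> S. e i *\<^sub>R v i)" by (rule cone_ofE)
  then have eqs: "(\<Sum>i\<in>S0. c0 i *\<^sub>R v i) = (\<Sum>i\<in>S0. (if i \<in> S then e i else 0) *\<^sub>R v i)"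
    using u sum_restrict_scaleR[where S=S0 and T=S and e=e and v=v] by simp
  have eqc: "c0 i = (if i \<in> S then e i else 0)" if "i \<in> S0" for i
    using indep_coeff[OF sf_inj[OF sf S0] sf_ind[OF sf S0] _ eqs that] by simp
  have sub: "S0 \<subseteq> S"
  proof
    fix i assume i: "i \<in> S0"
    show "i \<in> S"
    proof (rule ccontr)
      assume "i \<notin> S"
      then have "c0 i = 0" using eqc[OF i] by simp
      then show False using c0 i by force
    qed
  qed
  show ?thesis
  proof (rule ccontr)
    assume "S \<noteq> S0"
    then obtain j where j: "j \<in> S" "j \<notin> S0" using sub by blast
    define d where "d i = (if i \<in> S0 then c0 i else 0)" for i
    have ud: "u = (\<Sum>i\<in>S. d i *\<^sub>R v i)"
    proof -
      have "(\<Sum>i\<in>S0. d i *\<^sub>R v i) = (\<Sum>i\<in>S. d i *\<^sub>R v i)"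
        by (rule sum.mono_neutral_left) (auto simp: sub d_def)
      moreover have "(\<Sum>i\<in>S0. d i *\<^sub>R v i) = (\<Sum>i\<in>S0. c0 i *\<^sub>R v i)"
        by (rule sum.cong) (auto simp: d_def)
      ultimately show ?thesis using u by simp
    qed
    obtain T where T: "open T" "u \<in> T" "T \<inter> affine hull (cone_of v S) \<subseteq> cone_of v S"
      using ri unfolding mem_rel_interior by blast
    obtain \<epsilon> where \<epsilon>: "\<epsilon> > 0" "ball u \<epsilon> \<subseteq> T" using T(1,2) open_contains_ball by blast
    define t where "t = \<epsilon> / (norm (v j) + 1)"
    have tpos: "t > 0" unfolding t_def using \<epsilon>(1) by (simp add: add_nonneg_pos)
    have "t * norm (v j) < \<epsilon>"
    proof -
      have "t * norm (v j) < t * (norm (v j) + 1)" using tpos by simp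
      also have "\<dots> = \<epsilon>"
      proof -
        have "norm (v j) + 1 \<noteq> 0" by (metis add_nonneg_pos norm_ge_zero zero_less_one less_irrefl)
        then show ?thesis unfolding t_def by simp
      qed
      finally show ?thesis .
    qed
    define w where "w = u - t *\<^sub>R v j"
    have "dist u w < \<epsilon>" unfolding w_def dist_norm using tpos \<open>t * norm (v j) < \<epsilon>\<close> by simp
    then have "w \<in> ball u \<epsilon>" by (simp add: mem_ball)
    then have wT: "w \<in> T" using \<epsilon>(2) by (rule subsetD[rotated])
    have vj: "v j \<in> cone_of v S" using j(1) by (simp add: cone_of_gen)
    have "0 \<in> affine hull (cone_of v S)" by (rule hull_inc[OF cone_of_zero])
    then have ah: "affine hull (cone_of v S) = span (cone_of v S)" by (rule affine_hull_span_0)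
    have "w \<in> span (cone_of v S)" unfolding w_def
      using uS vj by (simp add: span_diff span_scale span_base)
    then have "w \<in> cone_of v S" using wT T(3) ah by blast
    then obtain f where f: "\<forall>i\<in>S. 0 \<le> f i" "w = (\<Sum>i\<in>S. f i *\<^sub>R v i)" by (rule cone_ofE)
    have "(\<Sum>i\<in>S. (if i = j then t else 0) *\<^sub>R v i) = t *\<^sub>R v j"
    proof -
      have "(\<Sum>i\<in>S. (if i = j then t else 0) *\<^sub>R v i) = (\<Sum>i\<in>S. if i = j then t *\<^sub>R v i else 0)"
        by (rule sum.cong) auto
      also have "\<dots> = t *\<^sub>R v j" using j(1) by simp
      finally show ?thesis .
    qed
    then have "w = (\<Sum>i\<in>S. (d i - (if i = j then t else 0)) *\<^sub>R v i)"
      unfolding w_def ud by (simp add: scaleR_diff_left sum_subtractf)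
    then have "f j = d j - (if j = j then t else 0)"
      using indep_coeff[OF sf_inj[OF sf S] sf_ind[OF sf S], of f "\<lambda>i. d i - (if i = j then t else 0)" j] f(2) j(1)
      by simp
    then have "f j = - t" using j(2) by (simp add: d_def)
    then show False using f(1) j(1) tpos by force
  qed
qed

lemma coord_vec_eq:
  fixes v :: "'n::finite \<Rightarrow> real^'d"
  assumes sf: "simplicial_fan \<Delta> v" and S0: "S0 \<in> \<Delta>" and c0: "\<forall>i\<in>S0. 0 < c0 i"
    and u: "u = (\<Sum>i\<in>S0. c0 i *\<^sub>R v i)"
  shows "coord_vec \<Delta> v u = (\<chi> i. if i \<in> S0 then c0 i else 0)"
proof -
  define c :: "real^'n" where "c = (\<chi> i. if i \<in> S0 then c0 i else 0)"
  have csum: "(\<Sum>i\<in>S0. c $ i *\<^sub>R v i) = (\<Sum>i\<in>S0. c0 i *\<^sub>R v i)"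
    by (rule sum.cong) (auto simp: c_def)
  have Pc: "\<exists>S\<in>\<Delta>. u \<in> rel_interior (cone_of v S) \<and> (\<forall>i. i \<notin> S \<longrightarrow> c $ i = 0) \<and>
              u = (\<Sum>i\<in>S. c $ i *\<^sub>R v i)"
  proof (intro bexI conjI)
    show "u \<in> rel_interior (cone_of v S0)"
      unfolding u by (rule relint_pos[OF sf_inj[OF sf S0] sf_ind[OF sf S0] c0])
    show "\<forall>i. i \<notin> S0 \<longrightarrow> c $ i = 0" by (simp add: c_def)
    show "u = (\<Sum>i\<in>S0. c $ i *\<^sub>R v i)" using csum u by simp
  qed (rule S0)
  have uniq: "c' = c" if H: "\<exists>S\<in>\<Delta>. u \<in> rel_interior (cone_of v S) \<and> (\<forall>i. i \<notin> S \<longrightarrow> c' $ i = 0) \<and>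
              u = (\<Sum>i\<in>S. c' $ i *\<^sub>R v i)" for c'
  proof -
    obtain S where S: "S \<in> \<Delta>" "u \<in> rel_interior (cone_of v S)" "\<forall>i. i \<notin> S \<longrightarrow> c' $ i = 0"
      "u = (\<Sum>i\<in>S. c' $ i *\<^sub>R v i)" using H by blast
    have SS0: "S = S0" using relint_unique[OF sf S0 c0 u S(1,2)] .
    have eq: "(\<Sum>i\<in>S0. c' $ i *\<^sub>R v i) = (\<Sum>i\<in>S0. c0 i *\<^sub>R v i)" using S(4) u SS0 by simp
    show ?thesis
    proof (subst vec_eq_iff, rule allI)
      fix i
      show "c' $ i = c $ i"
      proof (cases "i \<in> S0")
        case True
        then show ?thesis
          using indep_coeff[OF sf_inj[OF sf S0] sf_ind[OF sf S0] _ eq True] by (simp add: c_def)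
      next
        case False
        then show ?thesis using S(3) SS0 by (simp add: c_def)
      qed
    qed
  qed
  show ?thesis unfolding coord_vec_def c_def[symmetric]
    apply (rule the_equality)
     apply (rule Pc)
    apply (rule uniq)
    apply assumption
    done
qed

lemma support_P_of:
  fixes v :: "'n::finite \<Rightarrow> real^'d"
  assumes x: "\<forall>i\<in>S. x \<bullet> v i = h $ i" "\<forall>j. x \<bullet> v j \<le> h $ j"
    and c: "\<forall>i\<in>S. 0 \<le> c i" and u: "u = (\<Sum>i\<in>S. c i *\<^sub>R v i)"
  shows "support_fun (P_of v h) u = (\<Sum>i\<in>S. c i * h $ i)"
proof -
  have xP: "x \<in> P_of v h" using x(2) unfolding P_of_def by simp
  have ip: "z \<bullet> u = (\<Sum>i\<in>S. c i * (z \<bullet> v i))" for z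
    unfolding u by (simp add: inner_sum_right)
  have xu: "x \<bullet> u = (\<Sum>i\<in>S. c i * h $ i)"
    unfolding ip by (rule sum.cong) (use x(1) in auto)
  have le: "z \<bullet> u \<le> (\<Sum>i\<in>S. c i * h $ i)" if "z \<in> P_of v h" for z
  proof -
    have "z \<bullet> u = (\<Sum>i\<in>S. c i * (z \<bullet> v i))" by (rule ip)
    also have "\<dots> \<le> (\<Sum>i\<in>S. c i * h $ i)"
    proof (rule sum_mono)
      fix i assume "i \<in> S"
      moreover have "z \<bullet> v i \<le> h $ i" using that unfolding P_of_def by simp
      ultimately show "c i * (z \<bullet> v i) \<le> c i * h $ i" using c by (simp add: mult_left_mono)
    qed
    finally show ?thesis .
  qed
  show ?thesis unfolding support_fun_def
  proof (rule cSup_eq_maximum)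
    show "(\<Sum>i\<in>S. c i * h $ i) \<in> (\<lambda>x. x \<bullet> u) ` P_of v h" using xP xu by (metis image_eqI)
    fix y assume "y \<in> (\<lambda>x. x \<bullet> u) ` P_of v h"
    then show "y \<le> (\<Sum>i\<in>S. c i * h $ i)" using le by blast
  qed
qed

lemma compact_bdd:
  fixes Q :: "(real^'d) set"
  assumes "compact Q"
  shows "bdd_above ((\<lambda>z. z \<bullet> w) ` Q)"
proof -
  have "continuous_on Q (\<lambda>z. z \<bullet> w)" by (intro continuous_intros)
  then have "compact ((\<lambda>z. z \<bullet> w) ` Q)" using assms by (rule compact_continuous_image)
  then show ?thesis by (intro bounded_imp_bdd_above compact_imp_bounded)
qed

lemma defcone_sub:
  fixes v :: "'n::finite \<Rightarrow> real^'d"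
  assumes sf: "simplicial_fan \<Delta> v" and h: "h \<in> def_cone \<Delta> v" and S: "S \<in> \<Delta>"
  shows "\<exists>x. (\<forall>i\<in>S. x \<bullet> v i = h $ i) \<and> (\<forall>j. x \<bullet> v j \<le> h $ j)"
proof -
  obtain Q where Q: "polytope Q" "Q \<noteq> {}" "coarsens Q \<Delta> v" "h = (\<chi> i. support_fun Q (v i))"
    using h unfolding def_cone_def by blast
  have hQ: "h $ i = support_fun Q (v i)" for i using Q(4) by simp
  have cQ: "compact Q" using Q(1) by (rule polytope_imp_compact)
  define u where "u = (\<Sum>i\<in>S. 1 *\<^sub>R v i)"
  obtain F where F: "F face_of Q" "F \<noteq> {}" "u \<in> normal_cone Q F"
    using argmax_face[OF Q(1,2)] by blast
  have "normal_cone Q F \<in> normal_fan Q" unfolding normal_fan_def using F by blast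
  then obtain \<T> where \<T>: "\<T> \<subseteq> \<Delta>" "normal_cone Q F = (\<Union>S\<in>\<T>. cone_of v S)"
    using Q(3) unfolding coarsens_def by blast
  then obtain T where T: "T \<in> \<Delta>" "u \<in> cone_of v T" "cone_of v T \<subseteq> normal_cone Q F"
    using F(3) by blast
  have "u \<in> cone_of v S" unfolding u_def by (rule cone_ofI) simp
  then have "u \<in> cone_of v (S \<inter> T)" using sf_int[OF sf S T(1)] T(2) by blast
  then obtain e where e: "u = (\<Sum>i\<in>S \<inter> T. e i *\<^sub>R v i)" by (rule cone_ofE)
  then have eqs: "(\<Sum>i\<in>S. 1 *\<^sub>R v i) = (\<Sum>i\<in>S. (if i \<in> T then e i else 0) *\<^sub>R v i)"
    using sum_restrict_scaleR[where S=S and T=T and e=e and v=v] unfolding u_def by simp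
  have ST: "S \<subseteq> T"
  proof
    fix i assume i: "i \<in> S"
    have "1 = (if i \<in> T then e i else 0)"
      using indep_coeff[OF sf_inj[OF sf S] sf_ind[OF sf S] _ eqs i] by simp
    then show "i \<in> T" by (cases "i \<in> T") auto
  qed
  obtain x where x: "x \<in> F" using F(2) by blast
  have xQ: "x \<in> Q" using x F(1) face_of_imp_subset by blast
  have "x \<bullet> v i = h $ i" if i: "i \<in> S" for i
  proof -
    have "v i \<in> cone_of v T" using ST i by (simp add: cone_of_gen subsetD)
    then have "v i \<in> normal_cone Q F" using T(3) by blast
    then have max: "\<forall>z\<in>Q. z \<bullet> v i \<le> x \<bullet> v i" using x unfolding normal_cone_def by blast
    have "support_fun Q (v i) = x \<bullet> v i" unfolding support_fun_def
    proof (rule cSup_eq_maximum)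
      show "x \<bullet> v i \<in> (\<lambda>z. z \<bullet> v i) ` Q" using xQ by blast
      fix y assume "y \<in> (\<lambda>z. z \<bullet> v i) ` Q"
      then show "y \<le> x \<bullet> v i" using max by blast
    qed
    then show ?thesis using hQ by simp
  qed
  moreover have "x \<bullet> v j \<le> h $ j" for j
  proof -
    have "x \<bullet> v j \<le> Sup ((\<lambda>z. z \<bullet> v j) ` Q)"
      using xQ compact_bdd[OF cQ, of "v j"] by (intro cSup_upper) auto
    then show ?thesis using hQ unfolding support_fun_def by simp
  qed
  ultimately show ?thesis by blast
qed

lemma defcone_sup:
  fixes v :: "'n::finite \<Rightarrow> real^'d"
  assumes sf: "simplicial_fan \<Delta> v" and pf: "polytopal_fan \<Delta> v"
    and C: "\<forall>S\<in>\<Delta>. \<exists>x. (\<forall>i\<in>S. x \<bullet> v i = h $ i) \<and> (\<forall>j. x \<bullet> v j \<le> h $ j)"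
  shows "h \<in> def_cone \<Delta> v"
proof -
  obtain X where X: "\<forall>S\<in>\<Delta>. (\<forall>i\<in>S. X S \<bullet> v i = h $ i) \<and> (\<forall>j. X S \<bullet> v j \<le> h $ j)"
    using bchoice[OF C] by blast
  define Q where "Q = P_of v h"
  have XQ: "X S \<in> Q" if "S \<in> \<Delta>" for S using X that unfolding Q_def P_of_def by blast
  have Qeq: "Q = (\<Inter>j\<in>UNIV. {x. v j \<bullet> x \<le> h $ j})"
    unfolding Q_def P_of_def by (auto simp: inner_commute)
  have "polyhedron Q" unfolding Qeq
    by (intro polyhedron_Inter) (auto simp: polyhedron_halfspace_le)
  moreover have "bounded Q"
  proof -
    have "\<exists>M. \<forall>x\<in>Q. x \<bullet> w \<le> M" for w
    proof -
      obtain S c where S: "S \<in> \<Delta>" "\<forall>i\<in>S. 0 < c i" "w = (\<Sum>i\<in>S. c i *\<^sub>R v i)"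
        using pos_support[OF sf pf, of w] by blast
      have "x \<bullet> w \<le> (\<Sum>i\<in>S. c i * h $ i)" if "x \<in> Q" for x
      proof -
        have "x \<bullet> w = (\<Sum>i\<in>S. c i * (x \<bullet> v i))" unfolding S(3) by (simp add: inner_sum_right)
        also have "\<dots> \<le> (\<Sum>i\<in>S. c i * h $ i)"
        proof (rule sum_mono)
          fix i assume "i \<in> S"
          moreover have "x \<bullet> v i \<le> h $ i" using that unfolding Q_def P_of_def by simp
          ultimately show "c i * (x \<bullet> v i) \<le> c i * h $ i" using S(2) by (simp add: mult_left_mono)
        qed
        finally show ?thesis .
      qed
      then show ?thesis by blast
    qed
    then obtain M where M: "\<forall>w. \<forall>x\<in>Q. x \<bullet> w \<le> M w" by metis
    have "norm x \<le> (\<Sum>i\<in>UNIV. max (M (axis i 1)) (M (- axis i 1)))" if "x \<in> Q" for x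
    proof -
      have "norm x \<le> (\<Sum>i\<in>UNIV. \<bar>x $ i\<bar>)" by (rule norm_le_l1_cart)
      also have "\<dots> \<le> (\<Sum>i\<in>UNIV. max (M (axis i 1)) (M (- axis i 1)))"
      proof (rule sum_mono)
        fix i
        have "x $ i \<le> M (axis i 1)" using M that by (metis inner_axis mult_1_right inner_real_def)
        moreover have "- (x $ i) \<le> M (- axis i 1)" using M that
          by (metis inner_axis mult_1_right inner_real_def inner_minus_right)
        ultimately show "\<bar>x $ i\<bar> \<le> max (M (axis i 1)) (M (- axis i 1))" by linarith
      qed
      finally show ?thesis .
    qed
    then show ?thesis unfolding bounded_iff by blast
  qed
  ultimately have pQ: "polytope Q" by (simp add: polytope_eq_bounded_polyhedron)
  have Qne: "Q \<noteq> {}" using XQ[OF sf_empty[OF sf]] by blast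
  have hs: "h = (\<chi> i. support_fun Q (v i))"
  proof (subst vec_eq_iff, rule allI)
    fix i
    have Xi: "X {i} \<bullet> v i = h $ i" using X sf_single[OF sf, of i] by blast
    have "support_fun Q (v i) = h $ i" unfolding support_fun_def
    proof (rule cSup_eq_maximum)
      show "h $ i \<in> (\<lambda>z. z \<bullet> v i) ` Q" using XQ[OF sf_single[OF sf, of i]] Xi by (metis image_eqI)
      fix y assume "y \<in> (\<lambda>z. z \<bullet> v i) ` Q"
      then show "y \<le> h $ i" unfolding Q_def P_of_def by auto
    qed
    then show "h $ i = (\<chi> i. support_fun Q (v i)) $ i" by simp
  qed
  have "coarsens Q \<Delta> v" unfolding coarsens_def
  proof
    fix N assume "N \<in> normal_fan Q"
    then obtain F where F: "F face_of Q" "F \<noteq> {}" "N = normal_cone Q F"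
      unfolding normal_fan_def by blast
    define \<T> where "\<T> = {S\<in>\<Delta>. cone_of v S \<subseteq> N}"
    have "N = (\<Union>S\<in>\<T>. cone_of v S)"
    proof
      show "(\<Union>S\<in>\<T>. cone_of v S) \<subseteq> N" unfolding \<T>_def by blast
      show "N \<subseteq> (\<Union>S\<in>\<T>. cone_of v S)"
      proof
        fix u assume uN: "u \<in> N"
        obtain S c where S: "S \<in> \<Delta>" "\<forall>i\<in>S. 0 < c i" "u = (\<Sum>i\<in>S. c i *\<^sub>R v i)"
          using pos_support[OF sf pf, of u] by blast
        have tight: "x \<bullet> v i = h $ i" if x: "x \<in> F" and i: "i \<in> S" for x i
        proof -
          have xQ: "x \<in> Q" using x F(1) face_of_imp_subset by blast
          then have xle: "\<forall>j. x \<bullet> v j \<le> h $ j" unfolding Q_def P_of_def by simp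
          have "X S \<bullet> u \<le> x \<bullet> u" using uN F(3) x XQ[OF S(1)] unfolding normal_cone_def by blast
          moreover have "X S \<bullet> u = (\<Sum>i\<in>S. c i * h $ i)"
            unfolding S(3) inner_sum_right inner_scaleR_right
            by (rule sum.cong) (use X S(1) in auto)
          moreover have "x \<bullet> u = (\<Sum>i\<in>S. c i * (x \<bullet> v i))"
            unfolding S(3) inner_sum_right inner_scaleR_right by simp
          ultimately have "(\<Sum>i\<in>S. c i * (h $ i - x \<bullet> v i)) \<le> 0"
            by (simp add: right_diff_distrib sum_subtractf)
          moreover have nn: "\<forall>i\<in>S. 0 \<le> c i * (h $ i - x \<bullet> v i)"
            using S(2) xle by (simp add: less_imp_le)
          moreover have "0 \<le> (\<Sum>i\<in>S. c i * (h $ i - x \<bullet> v i))"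
            using nn by (simp add: sum_nonneg)
          ultimately have "(\<Sum>i\<in>S. c i * (h $ i - x \<bullet> v i)) = 0" by linarith
          then have "\<forall>i\<in>S. c i * (h $ i - x \<bullet> v i) = 0"
            using sum_nonneg_eq_0_iff[of S "\<lambda>i. c i * (h $ i - x \<bullet> v i)"] nn by simp
          then show ?thesis using i S(2) by force
        qed
        have "cone_of v S \<subseteq> N"
        proof
          fix w assume "w \<in> cone_of v S"
          then obtain \<mu> where \<mu>: "\<forall>i\<in>S. 0 \<le> \<mu> i" "w = (\<Sum>i\<in>S. \<mu> i *\<^sub>R v i)" by (rule cone_ofE)
          show "w \<in> N" unfolding F(3) normal_cone_def
          proof (intro CollectI ballI)
            fix x z assume x: "x \<in> F" and z: "z \<in> Q"
            have "z \<bullet> w = (\<Sum>i\<in>S. \<mu> i * (z \<bullet> v i))" unfolding \<mu>(2) by (simp add: inner_sum_right)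
            also have "\<dots> \<le> (\<Sum>i\<in>S. \<mu> i * (x \<bullet> v i))"
            proof (rule sum_mono)
              fix i assume i: "i \<in> S"
              have "z \<bullet> v i \<le> h $ i" using z unfolding Q_def P_of_def by simp
              then have "z \<bullet> v i \<le> x \<bullet> v i" using tight[OF x i] by simp
              then show "\<mu> i * (z \<bullet> v i) \<le> \<mu> i * (x \<bullet> v i)" using \<mu>(1) i by (simp add: mult_left_mono)
            qed
            also have "\<dots> = x \<bullet> w" unfolding \<mu>(2) by (simp add: inner_sum_right)
            finally show "z \<bullet> w \<le> x \<bullet> w" .
          qed
        qed
        moreover have "u \<in> cone_of v S" using S(2,3) by (simp add: cone_ofI less_imp_le)
        ultimately show "u \<in> (\<Union>S\<in>\<T>. cone_of v S)" using S(1) unfolding \<T>_def by blast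
      qed
    qed
    moreover have "\<T> \<subseteq> \<Delta>" unfolding \<T>_def by blast
    ultimately show "\<exists>T\<subseteq>\<Delta>. N = (\<Union>S\<in>T. cone_of v S)" by blast
  qed
  then show ?thesis unfolding def_cone_def using pQ Qne hs by blast
qed

lemma polyhedron_cone_linear_image:
  fixes K :: "'a::euclidean_space set" and f :: "'a \<Rightarrow> 'b::euclidean_space"
  assumes K: "polyhedron K" "cone K" and f: "linear f"
  shows "polyhedron (f ` K)"
proof (cases "K = {}")
  case True then show ?thesis by simp
next
  case Knz: False
  define B :: "'a set" where "B = cbox (- One) One"
  have "polyhedron (K \<inter> B)" unfolding B_def using K by auto
  moreover have "bounded (K \<inter> B)" unfolding B_def by (simp add: bounded_Int)
  ultimately have "polytope (K \<inter> B)" by (simp add: polytope_eq_bounded_polyhedron)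
  then obtain V where V: "finite V" "K \<inter> B = convex hull V" unfolding polytope_def by blast
  have "f ` K = convex_cone hull (f ` V)"
  proof
    have cc: "convex_cone (f ` K)" if "K \<noteq> {}"
    proof -
      have "convex_cone K" using K that polyhedron_imp_convex
        unfolding convex_cone_def conic_def cone_def by blast
      then show ?thesis using convex_cone_linear_image[of K f] f by blast
    qed
    have "V \<subseteq> convex hull V" by (rule hull_subset)
    then have "V \<subseteq> K" using V(2) by (metis Int_subset_iff)
    then have fv: "f ` V \<subseteq> f ` K" by (rule image_mono)
    show "convex_cone hull (f ` V) \<subseteq> f ` K"
      using cc[OF Knz] fv by (simp add: hull_minimal)
  next
    show "f ` K \<subseteq> convex_cone hull (f ` V)"
    proof
      fix z assume "z \<in> f ` K"
      then obtain k where k: "k \<in> K" "z = f k" by blast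
      define t where "t = norm k + 1"
      have t: "t > 0" unfolding t_def by (simp add: add_nonneg_pos)
      have "(1/t) *\<^sub>R k \<in> K" using K(2) k t unfolding cone_def by auto
      moreover have "(1/t) *\<^sub>R k \<in> B"
      proof -
        have "- 1 \<le> (k \<bullet> i) / t \<and> (k \<bullet> i) / t \<le> 1" if "i \<in> Basis" for i
        proof -
          have "\<bar>k \<bullet> i\<bar> \<le> norm k" using that by (simp add: Basis_le_norm)
          then have "\<bar>k \<bullet> i\<bar> \<le> t" unfolding t_def by simp
          then show ?thesis using t by (simp add: field_simps abs_le_iff)
        qed
        then show ?thesis unfolding B_def mem_box by auto
      qed
      ultimately have "f ((1/t) *\<^sub>R k) \<in> convex hull (f ` V)"
        using V convex_hull_linear_image[OF f] by blast
      then have "f ((1/t) *\<^sub>R k) \<in> convex_cone hull (f ` V)"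
        by (meson convex_convex_cone_hull hull_minimal hull_subset subsetD)
      then have "t *\<^sub>R f ((1/t) *\<^sub>R k) \<in> convex_cone hull (f ` V)"
        using t conic_convex_cone_hull unfolding conic_def by (meson less_imp_le)
      moreover have "t *\<^sub>R f ((1/t) *\<^sub>R k) = z" using t k f by (simp add: linear_scale)
      ultimately show "z \<in> convex_cone hull (f ` V)" by simp
    qed
  qed
  then show ?thesis using V by (simp add: polyhedron_convex_cone_hull)
qed


lemma support_coord:
  fixes v :: "'n::finite \<Rightarrow> real^'d"
  assumes sf: "simplicial_fan \<Delta> v" and pf: "polytopal_fan \<Delta> v" and h: "h \<in> def_cone \<Delta> v"
  shows "support_fun (P_of v h) u = coord_vec \<Delta> v u \<bullet> h"
proof -
  obtain S0 c0 where S0: "S0 \<in> \<Delta>" "\<forall>i\<in>S0. 0 < c0 i" "u = (\<Sum>i\<in>S0. c0 i *\<^sub>R v i)"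
    using pos_support[OF sf pf, of u] by blast
  obtain x where x: "\<forall>i\<in>S0. x \<bullet> v i = h $ i" "\<forall>j. x \<bullet> v j \<le> h $ j"
    using defcone_sub[OF sf h S0(1)] by blast
  have "support_fun (P_of v h) u = (\<Sum>i\<in>S0. c0 i * h $ i)"
    using support_P_of[OF x, of c0 u] S0(2,3) by (simp add: less_imp_le)
  also have "\<dots> = (\<Sum>i\<in>UNIV. if i \<in> S0 then c0 i * h $ i else 0)"
    using sum.inter_restrict[of UNIV "\<lambda>i. c0 i * h $ i" S0] by simp
  also have "\<dots> = (\<chi> i. if i \<in> S0 then c0 i else 0) \<bullet> h"
    unfolding inner_vec_def inner_real_def by (rule sum.cong) auto
  also have "\<dots> = coord_vec \<Delta> v u \<bullet> h" using coord_vec_eq[OF sf S0] by simp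
  finally show ?thesis .
qed

lemma linear_Cp:
  "linear (\<lambda>p::(real^'n) \<times> ((real^'d)^'s). (snd p $ S) \<bullet> w - fst p $ i)"
  by (rule linearI) (simp_all add: inner_add_left inner_scaleR_left algebra_simps)

lemma defcone_poly:
  fixes v :: "'n::finite \<Rightarrow> real^'d" and f :: "real^'n \<Rightarrow> 'b::euclidean_space"
  assumes sf: "simplicial_fan \<Delta> v" and pf: "polytopal_fan \<Delta> v" and f: "linear f"
  shows "polyhedron (f ` def_cone \<Delta> v)"
proof -
  define Cp :: "((real^'n) \<times> ((real^'d)^('n set))) set" where
    "Cp = {p. \<forall>S\<in>\<Delta>. (\<forall>i\<in>S. (snd p $ S) \<bullet> v i = fst p $ i) \<and> (\<forall>j. (snd p $ S) \<bullet> v j \<le> fst p $ j)}"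
  have eq: "def_cone \<Delta> v = fst ` Cp"
  proof
    show "def_cone \<Delta> v \<subseteq> fst ` Cp"
    proof
      fix h assume h: "h \<in> def_cone \<Delta> v"
      have ex: "\<forall>S\<in>\<Delta>. \<exists>x. (\<forall>i\<in>S. x \<bullet> v i = h $ i) \<and> (\<forall>j. x \<bullet> v j \<le> h $ j)"
        using defcone_sub[OF sf h] by blast
      obtain X where X: "\<forall>S\<in>\<Delta>. (\<forall>i\<in>S. X S \<bullet> v i = h $ i) \<and> (\<forall>j. X S \<bullet> v j \<le> h $ j)"
        using bchoice[OF ex] by blast
      have "(h, \<chi> S. X S) \<in> Cp" unfolding Cp_def using X by simp
      then show "h \<in> fst ` Cp" by (metis fst_conv image_eqI)
    qed
  next
    show "fst ` Cp \<subseteq> def_cone \<Delta> v"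
    proof
      fix h assume "h \<in> fst ` Cp"
      then obtain p where p: "p \<in> Cp" "h = fst p" by blast
      have "\<forall>S\<in>\<Delta>. \<exists>x. (\<forall>i\<in>S. x \<bullet> v i = h $ i) \<and> (\<forall>j. x \<bullet> v j \<le> h $ j)"
      proof
        fix S assume S: "S \<in> \<Delta>"
        show "\<exists>x. (\<forall>i\<in>S. x \<bullet> v i = h $ i) \<and> (\<forall>j. x \<bullet> v j \<le> h $ j)"
          using p S unfolding Cp_def by (intro exI[of _ "snd p $ S"]) auto
      qed
      then show "h \<in> def_cone \<Delta> v" by (rule defcone_sup[OF sf pf])
    qed
  qed
  have Cp_eq: "Cp = (\<Inter>S\<in>\<Delta>. \<Inter>i\<in>S. {p. (snd p $ S) \<bullet> v i - fst p $ i = 0}) \<inter>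
                    (\<Inter>S\<in>\<Delta>. \<Inter>j\<in>UNIV. {p. (snd p $ S) \<bullet> v j - fst p $ j \<le> 0})"
    unfolding Cp_def by auto
  have "polyhedron Cp" unfolding Cp_eq
  proof (intro polyhedron_Int polyhedron_Inter)
    show "finite ((\<lambda>S. \<Inter>i\<in>S. {p. (snd p $ S) \<bullet> v i - fst p $ i = 0}) ` \<Delta>)" by simp
    show "finite ((\<lambda>S. \<Inter>j\<in>UNIV. {p. (snd p $ S) \<bullet> v j - fst p $ j \<le> 0}) ` \<Delta>)" by simp
    fix A assume "A \<in> (\<lambda>S. \<Inter>i\<in>S. {p. (snd p $ S) \<bullet> v i - fst p $ i = 0}) ` \<Delta>"
    then obtain S where AS: "A = (\<Inter>i\<in>S. {p. (snd p $ S) \<bullet> v i - fst p $ i = 0})" by blast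
    have P: "polyhedron {p. (snd p $ S) \<bullet> v i - fst p $ i = 0}" for i
      by (rule polyhedron_linear_eq[OF linear_Cp])
    show "polyhedron A" unfolding AS
      apply (rule polyhedron_Inter)
       apply simp
      using P by blast
  next
    fix A assume "A \<in> (\<lambda>S. \<Inter>j\<in>UNIV. {p. (snd p $ S) \<bullet> v j - fst p $ j \<le> 0}) ` \<Delta>"
    then obtain S where AS: "A = (\<Inter>j\<in>UNIV. {p. (snd p $ S) \<bullet> v j - fst p $ j \<le> 0})" by blast
    have P: "polyhedron {p. (snd p $ S) \<bullet> v j - fst p $ j \<le> 0}" for j
      by (rule polyhedron_linear_le[OF linear_Cp])
    show "polyhedron A" unfolding AS
      apply (rule polyhedron_Inter)
       apply simp
      using P by blast
  qed
  moreover have "cone Cp" unfolding cone_def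
  proof (intro ballI allI impI)
    fix p c assume p: "p \<in> Cp" and c: "(0::real) \<le> c"
    show "c *\<^sub>R p \<in> Cp" unfolding Cp_def
    proof (intro CollectI ballI conjI allI)
      fix S i assume S: "S \<in> \<Delta>" and i: "i \<in> S"
      have "(snd p $ S) \<bullet> v i = fst p $ i" using p S i unfolding Cp_def by blast
      then show "(snd (c *\<^sub>R p) $ S) \<bullet> v i = fst (c *\<^sub>R p) $ i" by simp
    next
      fix S j assume S: "S \<in> \<Delta>"
      have "(snd p $ S) \<bullet> v j \<le> fst p $ j" using p S unfolding Cp_def by blast
      then show "(snd (c *\<^sub>R p) $ S) \<bullet> v j \<le> fst (c *\<^sub>R p) $ j" using c by (simp add: mult_left_mono)
    qed
  qed
  moreover have "linear (f \<circ> fst)" using f linear_fst by (rule linear_compose[rotated])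
  ultimately have "polyhedron ((f \<circ> fst) ` Cp)" by (rule polyhedron_cone_linear_image)
  then show ?thesis unfolding eq image_comp .
qed

theorem theorem3p1:
  fixes \<Delta> :: "'n::finite set set" and v :: "'n \<Rightarrow> real^'d::finite"
    and U :: "'m::finite \<Rightarrow> real^'d" and y :: "real^'m"
  assumes "simplicial_fan \<Delta> v" and "polytopal_fan \<Delta> v"
  shows "LSE \<Delta> v U y = {h \<in> def_cone \<Delta> v. \<forall>h' \<in> def_cone \<Delta> v.
            norm (A_mat \<Delta> v U *v h - y) \<le> norm (A_mat \<Delta> v U *v h' - y)}
    \<and> (\<exists>!yh. yh \<in> (\<lambda>h. A_mat \<Delta> v U *v h) ` def_cone \<Delta> v \<and>
            (\<forall>z \<in> (\<lambda>h. A_mat \<Delta> v U *v h) ` def_cone \<Delta> v. dist y yh \<le> dist y z))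
    \<and> (\<forall>yh. yh \<in> (\<lambda>h. A_mat \<Delta> v U *v h) ` def_cone \<Delta> v \<and>
            (\<forall>z \<in> (\<lambda>h. A_mat \<Delta> v U *v h) ` def_cone \<Delta> v. dist y yh \<le> dist y z) \<longrightarrow>
            LSE \<Delta> v U y = def_cone \<Delta> v \<inter> {h. A_mat \<Delta> v U *v h = yh})
    \<and> LSE \<Delta> v U y \<noteq> {} \<and> polyhedron (LSE \<Delta> v U y)"
proof -
  note sf = assms(1) and pf = assms(2)
  define A where "A = A_mat \<Delta> v U"
  define K where "K = def_cone \<Delta> v"
  define KA where "KA = (\<lambda>h. A *v h) ` K"
  have supp: "support_fun (P_of v h) (U k) = (A *v h) $ k" if h: "h \<in> K" for h k
  proof -
    have "(A *v h) $ k = (\<Sum>j\<in>UNIV. coord_vec \<Delta> v (U k) $ j * h $ j)"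
      unfolding A_def A_mat_def matrix_vector_mult_def by simp
    also have "\<dots> = coord_vec \<Delta> v (U k) \<bullet> h" unfolding inner_vec_def inner_real_def by simp
    also have "\<dots> = support_fun (P_of v h) (U k)"
      using support_coord[OF sf pf, of h "U k"] h unfolding K_def by simp
    finally show ?thesis by simp
  qed
  have obj: "ls_objective v U y h = (1 / real CARD('m)) * (norm (A *v h - y))\<^sup>2" if h: "h \<in> K" for h
  proof -
    have "(norm (A *v h - y))\<^sup>2 = (A *v h - y) \<bullet> (A *v h - y)" by (rule power2_norm_eq_inner)
    also have "\<dots> = (\<Sum>k\<in>UNIV. ((A *v h) $ k - y $ k)\<^sup>2)"
      unfolding inner_vec_def inner_real_def by (simp add: power2_eq_square)
    also have "\<dots> = (\<Sum>k\<in>UNIV. (support_fun (P_of v h) (U k) - y $ k)\<^sup>2)"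
      using supp[OF h] by simp
    finally show ?thesis unfolding ls_objective_def by simp
  qed
  have cmp: "ls_objective v U y h \<le> ls_objective v U y h' \<longleftrightarrow>
               norm (A *v h - y) \<le> norm (A *v h' - y)" if "h \<in> K" "h' \<in> K" for h h'
  proof -
    have pos: "0 < 1 / real CARD('m)" by simp
    have "ls_objective v U y h \<le> ls_objective v U y h' \<longleftrightarrow>
            (norm (A *v h - y))\<^sup>2 \<le> (norm (A *v h' - y))\<^sup>2"
      unfolding obj[OF that(1)] obj[OF that(2)] by (rule mult_le_cancel_left_pos[OF pos])
    also have "\<dots> \<longleftrightarrow> norm (A *v h - y) \<le> norm (A *v h' - y)"
      using abs_le_square_iff[of "norm (A *v h - y)" "norm (A *v h' - y)"] by simp
    finally show ?thesis .
  qed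
  have conj1: "LSE \<Delta> v U y = {h \<in> K. \<forall>h' \<in> K. norm (A *v h - y) \<le> norm (A *v h' - y)}"
    unfolding LSE_def K_def[symmetric] using cmp by blast
  have polyK: "polyhedron K" using defcone_poly[OF sf pf linear_id] unfolding K_def by simp
  have polyKA: "polyhedron KA" unfolding KA_def K_def
    using defcone_poly[OF sf pf matrix_vector_mul_linear[of A]] .
  have "0 \<in> K" unfolding K_def by (rule defcone_sup[OF sf pf]) (intro ballI exI[of _ 0]; simp)
  then have KAne: "KA \<noteq> {}" unfolding KA_def by blast
  have clKA: "closed KA" using polyKA by (rule polyhedron_imp_closed)
  have cvKA: "convex KA" using polyKA by (rule polyhedron_imp_convex)
  define yh0 where "yh0 = closest_point KA y"
  have yh0: "yh0 \<in> KA" "\<forall>z\<in>KA. dist y yh0 \<le> dist y z"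
    unfolding yh0_def using closest_point_exists[OF clKA KAne] by auto
  have uniq: "yh = yh0" if "yh \<in> KA" "\<forall>z\<in>KA. dist y yh \<le> dist y z" for yh
    unfolding yh0_def using closest_point_unique[OF cvKA clKA that] .
  have dn: "dist y (A *v h) = norm (A *v h - y)" for h by (simp add: dist_norm norm_minus_commute)
  have LSEeq: "LSE \<Delta> v U y = K \<inter> {h. A *v h = yh0}"
  proof
    show "LSE \<Delta> v U y \<subseteq> K \<inter> {h. A *v h = yh0}"
    proof
      fix h assume "h \<in> LSE \<Delta> v U y"
      then have h: "h \<in> K" "\<forall>h'\<in>K. norm (A *v h - y) \<le> norm (A *v h' - y)" using conj1 by auto
      have "A *v h \<in> KA" using h(1) unfolding KA_def by blast
      moreover have "\<forall>z\<in>KA. dist y (A *v h) \<le> dist y z" unfolding KA_def using h(2) dn by auto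
      ultimately have "A *v h = yh0" by (rule uniq)
      then show "h \<in> K \<inter> {h. A *v h = yh0}" using h(1) by blast
    qed
    show "K \<inter> {h. A *v h = yh0} \<subseteq> LSE \<Delta> v U y"
    proof
      fix h assume h: "h \<in> K \<inter> {h. A *v h = yh0}"
      have "\<forall>h'\<in>K. norm (A *v h - y) \<le> norm (A *v h' - y)"
      proof
        fix h' assume "h' \<in> K"
        then have "dist y yh0 \<le> dist y (A *v h')" using yh0(2) unfolding KA_def by blast
        then show "norm (A *v h - y) \<le> norm (A *v h' - y)" using h dn by auto
      qed
      then show "h \<in> LSE \<Delta> v U y" using conj1 h by blast
    qed
  qed
  have conj2: "\<exists>!yh. yh \<in> KA \<and> (\<forall>z \<in> KA. dist y yh \<le> dist y z)"
    using yh0 uniq by blast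
  have conj3: "\<forall>yh. yh \<in> KA \<and> (\<forall>z \<in> KA. dist y yh \<le> dist y z) \<longrightarrow>
            LSE \<Delta> v U y = K \<inter> {h. A *v h = yh}"
    using uniq LSEeq by blast
  have conj4: "LSE \<Delta> v U y \<noteq> {}"
  proof -
    obtain h where "h \<in> K" "A *v h = yh0" using yh0(1) unfolding KA_def by blast
    then show ?thesis using LSEeq by blast
  qed
  have lin_row: "linear (\<lambda>h. (A *v h) $ k)" for k
    using linear_compose[OF matrix_vector_mul_linear[of A] bounded_linear.linear[OF bounded_linear_vec_nth[of k]]]
    by (simp add: o_def)
  have "{h. A *v h = yh0} = (\<Inter>k\<in>UNIV. {h. (A *v h) $ k = yh0 $ k})" by (auto simp: vec_eq_iff)
  then have "polyhedron {h. A *v h = yh0}"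
    using polyhedron_linear_eq[OF lin_row] by (auto intro!: polyhedron_Inter)
  then have conj5: "polyhedron (LSE \<Delta> v U y)" unfolding LSEeq using polyK by simp
  show ?thesis using conj1 conj2 conj3 conj4 conj5 unfolding A_def K_def KA_def by blast
qed

end
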